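(* Let $S$ be a closed densely defined symmetric operator on a Hilbert space $\mathcal{H}$ and $V\ge0$ a bounded non-negative operator, and let $A:=S+iV$ with $\mathcal{D}(A)=\mathcal{D}(S)$. If $B$ is an operator extension of $A$ ($A\subset B$) that is dissipative, then $\mathcal{D}(B)\subset\mathcal{D}(S^* )$.
   Context: The inner product is antilinear in the first argument. A densely defined operator $B$ is dissipative if $\mathrm{Im}\langle\psi,B\psi\rangle\ge0$ for all $\psi\in\mathcal{D}(B)$. *)

theory Defs
  imports Complex_Main
begin

class complex_vector = real_vector +
  fixes scaleC :: "complex \<Rightarrow> 'a \<Rightarrow> 'a" (infixr "*\<^sub>C" 75)
  assumes scaleC_add_right: "a *\<^sub>C (x + y) = a *\<^sub>C x + a *\<^sub>C y"
    and scaleC_add_left: "(a + b) *\<^sub>C x = a *\<^sub>C x + b *\<^sub>C x"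
    and scaleC_scaleC: "a *\<^sub>C (b *\<^sub>C x) = (a * b) *\<^sub>C x"
    and scaleC_one: "1 *\<^sub>C x = x"
    and scaleR_scaleC: "scaleR r x = complex_of_real r *\<^sub>C x"

text \<open>Inner product, antilinear in the first argument, linear in the second.\<close>
class complex_inner = complex_vector +
  fixes cinner :: "'a \<Rightarrow> 'a \<Rightarrow> complex"
  assumes cinner_commute: "cinner x y = cnj (cinner y x)"
    and cinner_add_right: "cinner x (y + z) = cinner x y + cinner x z"
    and cinner_scaleC_right: "cinner x (a *\<^sub>C y) = a * cinner x y"
    and cinner_self_real: "Im (cinner x x) = 0"
    and cinner_self_nonneg: "0 \<le> Re (cinner x x)"
    and cinner_self_eq_zero: "cinner x x = 0 \<longleftrightarrow> x = 0"

definition cnorm :: "'a::complex_inner \<Rightarrow> real" where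
  "cnorm x = sqrt (Re (cinner x x))"

class chilbert_space = complex_inner +
  assumes norm_complete:
    "(\<forall>e>0. \<exists>N. \<forall>m\<ge>N. \<forall>n\<ge>N. sqrt (Re (cinner (X m - X n) (X m - X n))) < e)
      \<Longrightarrow> \<exists>L. (\<lambda>n. sqrt (Re (cinner (X n - L) (X n - L)))) \<longlonglongrightarrow> 0"

definition csubspace :: "'a::complex_vector set \<Rightarrow> bool" where
  "csubspace D \<longleftrightarrow> 0 \<in> D \<and> (\<forall>x\<in>D. \<forall>y\<in>D. x + y \<in> D) \<and> (\<forall>c. \<forall>x\<in>D. c *\<^sub>C x \<in> D)"

definition lin_op :: "'a::complex_vector set \<Rightarrow> ('a \<Rightarrow> 'a) \<Rightarrow> bool" where
  "lin_op D T \<longleftrightarrow> csubspace D \<and>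
     (\<forall>x\<in>D. \<forall>y\<in>D. T (x + y) = T x + T y) \<and> (\<forall>c. \<forall>x\<in>D. T (c *\<^sub>C x) = c *\<^sub>C T x)"

definition dense_set :: "'a::complex_inner set \<Rightarrow> bool" where
  "dense_set D \<longleftrightarrow> (\<forall>x. \<forall>e>0. \<exists>y\<in>D. cnorm (x - y) < e)"

definition densely_defined :: "'a::complex_inner set \<Rightarrow> ('a \<Rightarrow> 'a) \<Rightarrow> bool" where
  "densely_defined D T \<longleftrightarrow> lin_op D T \<and> dense_set D"

definition closed_op :: "'a::complex_inner set \<Rightarrow> ('a \<Rightarrow> 'a) \<Rightarrow> bool" where
  "closed_op D T \<longleftrightarrow> (\<forall>xs x y. (\<forall>n. xs n \<in> D) \<and> (\<lambda>n. cnorm (xs n - x)) \<longlonglongrightarrow> 0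
      \<and> (\<lambda>n. cnorm (T (xs n) - y)) \<longlonglongrightarrow> 0 \<longrightarrow> x \<in> D \<and> T x = y)"

definition symmetric_op :: "'a::complex_inner set \<Rightarrow> ('a \<Rightarrow> 'a) \<Rightarrow> bool" where
  "symmetric_op D T \<longleftrightarrow> densely_defined D T \<and>
     (\<forall>x\<in>D. \<forall>y\<in>D. cinner (T x) y = cinner x (T y))"

definition adjoint_dom :: "'a::complex_inner set \<Rightarrow> ('a \<Rightarrow> 'a) \<Rightarrow> 'a set" where
  "adjoint_dom D T = {y. \<exists>z. \<forall>x\<in>D. cinner (T x) y = cinner x z}"

definition bounded_op :: "('a::complex_inner \<Rightarrow> 'a) \<Rightarrow> bool" where
  "bounded_op V \<longleftrightarrow> lin_op UNIV V \<and> (\<exists>C. \<forall>x. cnorm (V x) \<le> C * cnorm x)"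

definition nonneg_op :: "('a::complex_inner \<Rightarrow> 'a) \<Rightarrow> bool" where
  "nonneg_op V \<longleftrightarrow> (\<forall>x. Im (cinner x (V x)) = 0 \<and> 0 \<le> Re (cinner x (V x)))"

definition dissipative :: "'a::complex_inner set \<Rightarrow> ('a \<Rightarrow> 'a) \<Rightarrow> bool" where
  "dissipative D B \<longleftrightarrow> densely_defined D B \<and> (\<forall>\<psi>\<in>D. 0 \<le> Im (cinner \<psi> (B \<psi>)))"

definition op_ext :: "'a set \<Rightarrow> ('a \<Rightarrow> 'b) \<Rightarrow> 'a set \<Rightarrow> ('a \<Rightarrow> 'b) \<Rightarrow> bool" where
  "op_ext D T D' T' \<longleftrightarrow> D \<subseteq> D' \<and> (\<forall>x\<in>D. T' x = T x)"

end

theory Submission imports Defs begin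

lemma cinner_add_left: "cinner (x + y) (z::'a::complex_inner) = cinner x z + cinner y z"
  using cinner_commute[of "x+y" z] cinner_add_right[of z x y] cinner_commute[of x z] cinner_commute[of y z]
  by simp
lemma cinner_scaleC_left: "cinner (a *\<^sub>C x) (z::'a::complex_inner) = cnj a * cinner x z"
  using cinner_commute[of "a *\<^sub>C x" z] cinner_scaleC_right[of z a x] cinner_commute[of x z]
  by simp
lemma scaleC_minus1: "(-1) *\<^sub>C (y::'a::complex_vector) = - y"
  using scaleR_scaleC[of "-1" y] by simp
lemma cinner_minus_right: "cinner x (- y) = - cinner x (y::'a::complex_inner)"
proof -
  have "cinner x ((-1) *\<^sub>C y) = -1 * cinner x y" by (rule cinner_scaleC_right)
  thus ?thesis unfolding scaleC_minus1 by simp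
qed
lemma cinner_minus_left: "cinner (- x) y = - cinner x (y::'a::complex_inner)"
proof -
  have "cinner ((-1) *\<^sub>C x) y = cnj (-1) * cinner x y" by (rule cinner_scaleC_left)
  thus ?thesis unfolding scaleC_minus1 by simp
qed
lemma cinner_diff_right: "cinner x (y - z) = cinner x y - cinner x (z::'a::complex_inner)"
  unfolding diff_conv_add_uminus by (simp only: cinner_add_right cinner_minus_right)
lemma cinner_diff_left: "cinner (x - y) z = cinner x z - cinner y (z::'a::complex_inner)"
  unfolding diff_conv_add_uminus by (simp only: cinner_add_left cinner_minus_left)
lemma cinner_zero_right[simp]: "cinner x 0 = (0::complex)" for x :: "'a::complex_inner"
proof -
  have "cinner x (0+0) = cinner x 0 + cinner x 0" by (rule cinner_add_right)
  hence "cinner x 0 + cinner x 0 = cinner x 0" by simp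
  thus ?thesis by (metis add_cancel_right_left add_right_cancel)
qed
lemma cinner_zero_left[simp]: "cinner 0 x = (0::complex)" for x :: "'a::complex_inner"
  using cinner_commute[of 0 x] by simp
lemma Re_cinner_sym: "Re (cinner y x) = Re (cinner x (y::'a::complex_inner))"
  using cinner_commute[of y x] by simp
lemma cinner_self_Re: "cinner x x = complex_of_real (Re (cinner x (x::'a::complex_inner)))"
  by (simp add: complex_eq_iff cinner_self_real)

lemma discr: fixes a b c :: real
  assumes "\<And>t. 0 \<le> a + 2*t*b + t^2*c" "0 \<le> c"
  shows "b^2 \<le> a*c"
proof (cases "c = 0")
  case True
  have "b = 0"
  proof (rule ccontr)
    assume "b \<noteq> 0"
    have "0 \<le> a + 2*(-(\<bar>a\<bar>+1)/(2*b))*b + (-(\<bar>a\<bar>+1)/(2*b))^2*c" by (rule assms(1))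
    moreover have "2*(-(\<bar>a\<bar>+1)/(2*b))*b = -(\<bar>a\<bar>+1)" using \<open>b\<noteq>0\<close> by simp
    ultimately show False using True by simp
  qed
  then show ?thesis using True by simp
next
  case False
  hence c: "c > 0" using assms(2) by simp
  have "0 \<le> a + 2*(-b/c)*b + (-b/c)^2*c" by (rule assms(1))
  hence "0 \<le> (a + 2*(-b/c)*b + (-b/c)^2*c) * c" using c by simp
  also have "\<dots> = a*c - b^2" using c by (simp add: field_simps power2_eq_square)
  finally show ?thesis by simp
qed

lemma cnorm_nonneg: "0 \<le> cnorm x"
  by (simp add: cnorm_def cinner_self_nonneg)
lemma cnorm_sq: "cnorm x ^ 2 = Re (cinner x x)"
  by (simp add: cnorm_def cinner_self_nonneg)

lemma Re_expand: fixes x y :: "'a::complex_inner"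
  shows "Re (cinner (x + c *\<^sub>C y) (x + c *\<^sub>C y)) =
    Re (cinner x x) + 2 * Re (c * cinner x y) + (cmod c)^2 * Re (cinner y y)"
proof -
  have e: "cinner (x + c *\<^sub>C y) (x + c *\<^sub>C y) = cinner x x + c * cinner x y + cnj c * cinner y x + cnj c * c * cinner y y"
    by (simp add: cinner_add_left cinner_add_right cinner_scaleC_left cinner_scaleC_right algebra_simps)
  have "Re (cnj c * cinner y x) = Re (c * cinner x y)"
    using cinner_commute[of y x] by (metis complex_cnj_cnj complex_cnj_mult cnj.simps(1))
  moreover have "cnj c * c = complex_of_real ((cmod c)^2)"
    by (metis complex_norm_square mult.commute of_real_power)
  moreover have "Re (complex_of_real r * cinner y y) = r * Re (cinner y y)" for r
    by simp
  ultimately show ?thesis unfolding e by simp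
qed

lemma CS_Re: fixes x y :: "'a::complex_inner"
  shows "(Re (cinner x y))^2 \<le> Re (cinner x x) * Re (cinner y y)"
proof (rule discr)
  fix t :: real
  show "0 \<le> Re (cinner x x) + 2 * t * Re (cinner x y) + t^2 * Re (cinner y y)"
    using Re_expand[of x "complex_of_real t" y] cinner_self_nonneg[of "x + complex_of_real t *\<^sub>C y"]
    by simp
qed (rule cinner_self_nonneg)

lemma CS: fixes x y :: "'a::complex_inner"
  shows "cmod (cinner x y) \<le> cnorm x * cnorm y"
proof (cases "cinner x y = 0")
  case True thus ?thesis by (simp add: cnorm_nonneg)
next
  case False
  define w where "w = cinner x y"
  define c where "c = cnj w / complex_of_real (cmod w)"
  have wn: "cmod w > 0" using False w_def by simp
  have cm: "cmod c = 1" using wn by (simp add: c_def norm_divide)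
  have "cnj w * w = complex_of_real ((cmod w)^2)" using complex_norm_square[of w] by (simp add: mult.commute)
  have "c * w = (cnj w * w) / complex_of_real (cmod w)" by (simp add: c_def)
  also have "\<dots> = complex_of_real ((cmod w)^2) / complex_of_real (cmod w)"
    using \<open>cnj w * w = _\<close> by simp
  also have "\<dots> = complex_of_real ((cmod w)^2 / cmod w)" by (simp only: of_real_divide)
  also have "\<dots> = complex_of_real (cmod w)" using wn by (simp add: power2_eq_square)
  finally have "c * w = complex_of_real (cmod w)" .
  hence "Re (cinner x (c *\<^sub>C y)) = cmod w" by (simp add: cinner_scaleC_right w_def)
  moreover have "Re (cinner (c *\<^sub>C y) (c *\<^sub>C y)) = Re (cinner y y)"
    using Re_expand[of 0 c y] cm by simp
  ultimately have "(cmod w)^2 \<le> Re (cinner x x) * Re (cinner y y)"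
    using CS_Re[of x "c *\<^sub>C y"] by simp
  hence "(cmod w)^2 \<le> (cnorm x * cnorm y)^2" by (simp add: power_mult_distrib cnorm_sq)
  hence "cmod w \<le> cnorm x * cnorm y"
    by (meson cnorm_nonneg mult_nonneg_nonneg power2_le_imp_le)
  thus ?thesis by (simp add: w_def)
qed

lemma cnorm_triangle: "cnorm (x + y) \<le> cnorm x + cnorm (y::'a::complex_inner)"
proof -
  have "Re (cinner (x + y) (x + y)) = Re (cinner x x) + 2 * Re (cinner x y) + Re (cinner y y)"
    using Re_expand[of x 1 y] by (simp add: scaleC_one)
  also have "\<dots> \<le> (cnorm x)^2 + 2 * (cnorm x * cnorm y) + (cnorm y)^2"
    using CS[of x y] complex_Re_le_cmod[of "cinner x y"] by (simp add: cnorm_sq)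
  also have "\<dots> = (cnorm x + cnorm y)^2" by algebra
  finally have "(cnorm (x+y))^2 \<le> (cnorm x + cnorm y)^2" by (simp add: cnorm_sq)
  thus ?thesis by (meson cnorm_nonneg add_nonneg_nonneg power2_le_imp_le)
qed

lemma cnorm_scaleC: "cnorm (c *\<^sub>C x) = cmod c * cnorm (x::'a::complex_inner)"
proof -
  have "Re (cinner (c *\<^sub>C x) (c *\<^sub>C x)) = (cmod c)^2 * Re (cinner x x)"
    using Re_expand[of 0 c x] by simp
  thus ?thesis by (simp add: cnorm_def real_sqrt_mult)
qed

lemma cinner_tendsto:
  fixes Y :: "nat \<Rightarrow> 'a::complex_inner"
  assumes "(\<lambda>n. cnorm (Y n - L)) \<longlonglongrightarrow> 0"
  shows "(\<lambda>n. Re (cinner (Y n) x)) \<longlonglongrightarrow> Re (cinner L x)"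
proof -
  have "(\<lambda>n. Re (cinner (Y n) x) - Re (cinner L x)) \<longlonglongrightarrow> 0"
  proof (rule tendsto_0_le[OF assms])
    show "\<forall>\<^sub>F n in sequentially. norm (Re (cinner (Y n) x) - Re (cinner L x)) \<le> norm (cnorm (Y n - L)) * cnorm x"
    proof (rule always_eventually, rule allI)
      fix n
      have "Re (cinner (Y n) x) - Re (cinner L x) = Re (cinner (Y n - L) x)"
        by (simp add: cinner_diff_left)
      also have "norm \<dots> \<le> cmod (cinner (Y n - L) x)" by (simp add: abs_Re_le_cmod)
      also have "\<dots> \<le> cnorm (Y n - L) * cnorm x" by (rule CS)
      finally show "norm (Re (cinner (Y n) x) - Re (cinner L x)) \<le> norm (cnorm (Y n - L)) * cnorm x"
        by (simp add: cnorm_nonneg)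
    qed
  qed
  thus ?thesis by (rule LIM_zero_cancel)
qed

lemma riesz:
  fixes D :: "'a::chilbert_space set" and l :: "'a \<Rightarrow> complex"
  assumes sub: "csubspace D"
    and ladd: "\<forall>x\<in>D. \<forall>y\<in>D. l (x + y) = l x + l y"
    and lscale: "\<forall>c. \<forall>x\<in>D. l (c *\<^sub>C x) = c * l x"
    and lb: "\<forall>x\<in>D. cmod (l x) \<le> K * cnorm x"
  shows "\<exists>z. \<forall>x\<in>D. l x = cinner z x"
proof -
  define K' where "K' = max K 0"
  have K'0: "0 \<le> K'" by (simp add: K'_def)
  have lb': "cmod (l x) \<le> K' * cnorm x" if "x \<in> D" for x
  proof -
    have "K * cnorm x \<le> K' * cnorm x" by (simp add: K'_def cnorm_nonneg mult_right_mono)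
    thus ?thesis using lb that by force
  qed
  have D0: "0 \<in> D" and Dadd: "\<And>x y. x \<in> D \<Longrightarrow> y \<in> D \<Longrightarrow> x + y \<in> D"
    and Dsc: "\<And>c x. x \<in> D \<Longrightarrow> c *\<^sub>C x \<in> D"
    using sub by (auto simp: csubspace_def)
  define Q where "Q y = Re (cinner y y) - 2 * Re (l y)" for y
  have Qlow: "- (K'^2) \<le> Q y" if "y \<in> D" for y
  proof -
    have "Re (l y) \<le> K' * cnorm y" using lb'[OF that] complex_Re_le_cmod[of "l y"] by linarith
    moreover have "0 \<le> (cnorm y - K')^2" by simp
    ultimately show ?thesis unfolding Q_def cnorm_sq[symmetric] by (simp add: power2_eq_square algebra_simps)
  qed
  define m where "m = Inf (Q ` D)"
  have bdd: "bdd_below (Q ` D)" using Qlow by (auto intro!: bdd_belowI)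
  have mle: "m \<le> Q y" if "y \<in> D" for y unfolding m_def using bdd that by (simp add: cInf_lower)
  have "\<exists>y. y \<in> D \<and> Q y < m + 1 / real (Suc n)" for n
  proof -
    have "Inf (Q ` D) < m + 1 / real (Suc n)" by (simp add: m_def)
    then obtain q where "q \<in> Q ` D" "q < m + 1 / real (Suc n)"
      using cInf_lessD[of "Q ` D"] D0 by blast
    thus ?thesis by blast
  qed
  then obtain Y where Y: "\<And>n. Y n \<in> D" "\<And>n. Q (Y n) < m + 1 / real (Suc n)" by metis
  have para: "Re (cinner (a - b) (a - b)) \<le> 2 * (Q a + Q b) - 4 * m" if "a \<in> D" "b \<in> D" for a b
  proof -
    define h where "h = complex_of_real (1/2) *\<^sub>C (a + b)"
    have hD: "h \<in> D" unfolding h_def using that Dadd Dsc by blast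
    have lh: "l h = complex_of_real (1/2) * (l a + l b)" unfolding h_def using that ladd lscale Dadd by simp
    have hh: "Re (cinner h h) = (1/4) * Re (cinner (a+b) (a+b))"
      using Re_expand[of 0 "complex_of_real (1/2)" "a+b"] unfolding h_def by (simp add: power2_eq_square)
    have p1: "Re (cinner (a+b) (a+b)) = Re (cinner a a) + 2 * Re (cinner a b) + Re (cinner b b)"
      using Re_expand[of a 1 b] by (simp add: scaleC_one)
    have p2: "Re (cinner (a-b) (a-b)) = Re (cinner a a) - 2 * Re (cinner a b) + Re (cinner b b)"
      using Re_expand[of a "-1" b] by (simp add: scaleC_minus1)
    have "m \<le> Q h" using mle hD .
    moreover have "2 * Re (l h) = Re (l a) + Re (l b)"
    proof -
      have "Re (l h) = Re (complex_of_real (1/2) * (l a + l b))" by (simp only: lh)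
      also have "\<dots> = (1/2) * (Re (l a) + Re (l b))" by (simp only: times_complex.sel plus_complex.sel Re_complex_of_real Im_complex_of_real)
      finally show ?thesis by simp
    qed
    moreover have "4 * Re (cinner h h) = Re (cinner (a+b) (a+b))" using hh by simp
    ultimately have "4 * m \<le> Re (cinner (a+b) (a+b)) - 4 * Re (l a) - 4 * Re (l b)"
      unfolding Q_def by linarith
    hence "4 * m \<le> Re (cinner a a) + 2 * Re (cinner a b) + Re (cinner b b) - 4 * Re (l a) - 4 * Re (l b)"
      using p1 by linarith
    thus ?thesis unfolding Q_def using p2 by argo
  qed
  have cauchy: "\<forall>e>0. \<exists>N. \<forall>i\<ge>N. \<forall>j\<ge>N. sqrt (Re (cinner (Y i - Y j) (Y i - Y j))) < e"
  proof (intro allI impI)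
    fix e :: real assume e: "e > 0"
    then obtain N where N: "inverse (real (Suc N)) < e^2 / 4"
      using reals_Archimedean[of "e^2/4"] by auto
    have "sqrt (Re (cinner (Y i - Y j) (Y i - Y j))) < e" if "i \<ge> N" "j \<ge> N" for i j
    proof -
      have "Re (cinner (Y i - Y j) (Y i - Y j)) \<le> 2 * (Q (Y i) + Q (Y j)) - 4 * m"
        using para Y(1) by blast
      also have "\<dots> \<le> 2 * (1 / real (Suc i) + 1 / real (Suc j))"
        using Y(2)[of i] Y(2)[of j] by simp
      also have "\<dots> \<le> 2 * (1 / real (Suc N) + 1 / real (Suc N))"
        using that by (intro mult_left_mono add_mono divide_left_mono) auto
      also have "\<dots> < e^2" using N by (simp add: field_simps)
      finally have "Re (cinner (Y i - Y j) (Y i - Y j)) < e^2" .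
      hence "sqrt (Re (cinner (Y i - Y j) (Y i - Y j))) < sqrt (e^2)" by (rule real_sqrt_less_mono)
      thus ?thesis using e by simp
    qed
    thus "\<exists>N. \<forall>i\<ge>N. \<forall>j\<ge>N. sqrt (Re (cinner (Y i - Y j) (Y i - Y j))) < e" by blast
  qed
  obtain L where L: "(\<lambda>n. cnorm (Y n - L)) \<longlonglongrightarrow> 0"
    using norm_complete[OF cauchy] unfolding cnorm_def by blast
  have key: "Re (cinner L x) = Re (l x)" if xD: "x \<in> D" for x
  proof -
    define R where "R = Re (cinner L x) - Re (l x)"
    define N where "N = Re (cinner x x)"
    have "0 \<le> 0 + 2 * t * R + t^2 * N" for t
    proof -
      have ev: "0 \<le> 1 / real (Suc n) + 2 * t * (Re (cinner (Y n) x) - Re (l x)) + t^2 * N" for n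
      proof -
        have "Y n + complex_of_real t *\<^sub>C x \<in> D" using Y(1) xD Dadd Dsc by blast
        hence "m \<le> Q (Y n + complex_of_real t *\<^sub>C x)" by (rule mle)
        also have "Q (Y n + complex_of_real t *\<^sub>C x) = Q (Y n) + 2 * t * (Re (cinner (Y n) x) - Re (l x)) + t^2 * N"
        proof -
          have "l (Y n + complex_of_real t *\<^sub>C x) = l (Y n) + complex_of_real t * l x"
            using ladd lscale Y(1) xD Dsc by simp
          thus ?thesis unfolding Q_def N_def using Re_expand[of "Y n" "complex_of_real t" x]
            by (simp add: algebra_simps)
        qed
        finally show ?thesis using Y(2)[of n] by simp
      qed
      have lim: "(\<lambda>n. 1 / real (Suc n) + 2 * t * (Re (cinner (Y n) x) - Re (l x)) + t^2 * N)
          \<longlonglongrightarrow> 0 + 2 * t * (Re (cinner L x) - Re (l x)) + t^2 * N"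
        by (intro tendsto_intros cinner_tendsto[OF L] LIMSEQ_Suc[OF lim_inverse_n'] )
      show ?thesis unfolding R_def
        by (rule LIMSEQ_le_const[OF lim]) (use ev in auto)
    qed
    hence "R^2 \<le> 0 * N" by (rule discr) (simp add: N_def cinner_self_nonneg)
    hence "R = 0" by simp
    thus ?thesis by (simp add: R_def)
  qed
  have "l x = cinner L x" if xD: "x \<in> D" for x
  proof -
    have "Re (cinner L (\<i> *\<^sub>C x)) = Re (l (\<i> *\<^sub>C x))" using key Dsc xD by blast
    hence "Im (cinner L x) = Im (l x)" using lscale xD by (simp add: cinner_scaleC_right)
    moreover have "Re (cinner L x) = Re (l x)" using key xD by blast
    ultimately show ?thesis by (simp add: complex_eq_iff)
  qed
  thus ?thesis by blast
qed

lemma Im_quad: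
  fixes c P Q1 Q2 R :: complex
  shows "Im (P + c * Q1 + cnj c * cnj Q2 + cnj c * c * R) = Im P + Im (c * (Q1 - Q2)) + (cmod c)^2 * Im R"
proof -
  have "cnj c * cnj Q2 = cnj (c * Q2)" by simp
  hence a: "Im (cnj c * cnj Q2) = - Im (c * Q2)" by (simp only: complex_cnj_mult[symmetric] cnj.sel(2))
  have "cnj c * c = complex_of_real ((cmod c)^2)"
    using complex_norm_square[of c] by (simp add: mult.commute)
  hence b: "Im (cnj c * c * R) = (cmod c)^2 * Im R" by simp
  show ?thesis using a b by (simp add: right_diff_distrib)
qed

lemma choose_c:
  fixes E :: complex and s :: real
  defines "c \<equiv> complex_of_real s * (- \<i>) * cnj E"
  shows "Im (c * E) = - s * (cmod E)^2" and "(cmod c)^2 = s^2 * (cmod E)^2"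
proof -
  have "cnj E * E = complex_of_real ((cmod E)^2)"
    using complex_norm_square[of E] by (simp add: mult.commute)
  hence "c * E = complex_of_real s * (- \<i>) * complex_of_real ((cmod E)^2)"
    unfolding c_def by (simp add: mult.assoc)
  thus "Im (c * E) = - s * (cmod E)^2" by simp
  show "(cmod c)^2 = s^2 * (cmod E)^2"
    unfolding c_def by (simp add: norm_mult power_mult_distrib)
qed

theorem lemma6p2:
  fixes S V B :: "'a::chilbert_space \<Rightarrow> 'a" and DS DB :: "'a set"
  assumes "symmetric_op DS S" and "closed_op DS S"
    and "bounded_op V" and "nonneg_op V"
    and "lin_op DB B"
    and "op_ext DS (\<lambda>x. S x + \<i> *\<^sub>C V x) DB B"
    and "dissipative DB B"
  shows "DB \<subseteq> adjoint_dom DS S"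
proof
  fix \<psi> assume psi: "\<psi> \<in> DB"
  have linS: "lin_op DS S" and symS: "\<forall>x\<in>DS. \<forall>y\<in>DS. cinner (S x) y = cinner x (S y)"
    using assms(1) by (auto simp: symmetric_op_def densely_defined_def)
  have subS: "csubspace DS" and Sadd: "\<forall>x\<in>DS. \<forall>y\<in>DS. S (x + y) = S x + S y"
    and Ssc: "\<forall>c. \<forall>x\<in>DS. S (c *\<^sub>C x) = c *\<^sub>C S x"
    using linS by (auto simp: lin_op_def)
  have subB: "csubspace DB" and Badd: "\<forall>x\<in>DB. \<forall>y\<in>DB. B (x + y) = B x + B y"
    and Bsc: "\<forall>c. \<forall>x\<in>DB. B (c *\<^sub>C x) = c *\<^sub>C B x"
    using assms(5) by (auto simp: lin_op_def)
  have ext1: "DS \<subseteq> DB" and ext2: "\<And>x. x \<in> DS \<Longrightarrow> B x = S x + \<i> *\<^sub>C V x"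
    using assms(6) by (auto simp: op_ext_def)
  have diss: "\<And>\<phi>. \<phi> \<in> DB \<Longrightarrow> 0 \<le> Im (cinner \<phi> (B \<phi>))"
    using assms(7) by (auto simp: dissipative_def)
  obtain C0 where C0: "\<And>x. cnorm (V x) \<le> C0 * cnorm x" using assms(3) by (auto simp: bounded_op_def)
  define C where "C = max C0 0"
  have C: "cnorm (V x) \<le> C * cnorm x" for x
  proof -
    have "C0 * cnorm x \<le> C * cnorm x" by (simp add: C_def cnorm_nonneg mult_right_mono)
    thus ?thesis using C0[of x] by linarith
  qed
  have C0': "0 \<le> C" by (simp add: C_def)
  have Vnn: "\<And>x. Im (cinner x (V x)) = 0 \<and> 0 \<le> Re (cinner x (V x))"
    using assms(4) by (simp add: nonneg_op_def)
  define a where "a = Im (cinner \<psi> (B \<psi>))"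
  have a0: "0 \<le> a" unfolding a_def using diss psi .
  define K where "K = 2 * sqrt (a * C) + cnorm (B \<psi>) + cnorm \<psi> * C"
  define l where "l x = cinner \<psi> (S x)" for x
  have bound: "cmod (l x) \<le> K * cnorm x" if xS: "x \<in> DS" for x
  proof -
    have xB: "x \<in> DB" using xS ext1 by blast
    define E where "E = cinner \<psi> (B x) - cinner (B \<psi>) x"
    define v where "v = Im (cinner x (B x))"
    have ImSx: "Im (cinner x (S x)) = 0"
    proof -
      have "cinner (S x) x = cinner x (S x)" using symS xS by blast
      hence "cnj (cinner x (S x)) = cinner x (S x)" using cinner_commute[of "S x" x] by simp
      hence "Im (cnj (cinner x (S x))) = Im (cinner x (S x))" by simp
      thus ?thesis by simp
    qed
    have v_eq: "v = Re (cinner x (V x))"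
      unfolding v_def ext2[OF xS] using ImSx by (simp add: cinner_add_right cinner_scaleC_right)
    have v0: "0 \<le> v" using Vnn v_eq by simp
    have vle: "v \<le> C * (cnorm x)^2"
    proof -
      have "v \<le> cmod (cinner x (V x))" using v_eq complex_Re_le_cmod by simp
      also have "\<dots> \<le> cnorm x * cnorm (V x)" by (rule CS)
      also have "\<dots> \<le> cnorm x * (C * cnorm x)" using C by (simp add: cnorm_nonneg mult_left_mono)
      finally show ?thesis by (simp add: power2_eq_square mult.commute mult.left_commute)
    qed
    have quad: "0 \<le> a + 2 * s * ((-1/2) * (cmod E)^2) + s^2 * ((cmod E)^2 * v)" for s
    proof -
      define c where "c = complex_of_real s * (- \<i>) * cnj E"
      have inD: "\<psi> + c *\<^sub>C x \<in> DB" using subB psi xB by (auto simp: csubspace_def)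
      have "B (\<psi> + c *\<^sub>C x) = B \<psi> + c *\<^sub>C B x"
        using Badd Bsc psi xB subB by (auto simp: csubspace_def)
      hence "cinner (\<psi> + c *\<^sub>C x) (B (\<psi> + c *\<^sub>C x)) =
          cinner \<psi> (B \<psi>) + c * cinner \<psi> (B x) + cnj c * cnj (cinner (B \<psi>) x) + cnj c * c * cinner x (B x)"
        using cinner_commute[of x "B \<psi>"]
        by (simp add: cinner_add_left cinner_add_right cinner_scaleC_left cinner_scaleC_right algebra_simps)
      hence "Im (cinner (\<psi> + c *\<^sub>C x) (B (\<psi> + c *\<^sub>C x))) = a + Im (c * E) + (cmod c)^2 * v"
        unfolding a_def E_def v_def by (simp only: Im_quad)
      also have "\<dots> = a - s * (cmod E)^2 + s^2 * (cmod E)^2 * v"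
        using choose_c[of s E] unfolding c_def by simp
      finally have "0 \<le> a - s * (cmod E)^2 + s^2 * (cmod E)^2 * v"
        using diss[OF inD] by simp
      thus ?thesis by (simp add: algebra_simps)
    qed
    have "((-1/2) * (cmod E)^2)^2 \<le> a * ((cmod E)^2 * v)"
      by (rule discr[OF quad]) (simp add: v0)
    hence "(cmod E)^2 * (cmod E)^2 \<le> (cmod E)^2 * (4 * a * v)"
      by (simp add: power2_eq_square algebra_simps)
    hence E2: "(cmod E)^2 \<le> 4 * a * v"
    proof (cases "E = 0")
      case True thus ?thesis using a0 v0 by simp
    next
      case False
      hence "0 < (cmod E)^2" by simp
      thus ?thesis using \<open>(cmod E)^2 * (cmod E)^2 \<le> (cmod E)^2 * (4 * a * v)\<close>
        by (metis mult_le_cancel_left_pos)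
    qed
    have "4 * a * v \<le> 4 * a * (C * (cnorm x)^2)" using vle a0 by (simp add: mult_left_mono)
    also have "\<dots> = (2 * sqrt (a * C) * cnorm x)^2"
      using a0 C0' by (simp add: power_mult_distrib real_sqrt_mult)
    finally have "(cmod E)^2 \<le> (2 * sqrt (a * C) * cnorm x)^2" using E2 by linarith
    hence Eb: "cmod E \<le> 2 * sqrt (a * C) * cnorm x"
      by (rule power2_le_imp_le) (simp add: cnorm_nonneg a0 C0')
    have lx: "l x = E + cinner (B \<psi>) x - \<i> * cinner \<psi> (V x)"
      unfolding l_def E_def ext2[OF xS] by (simp add: cinner_add_right cinner_scaleC_right)
    have "cmod (l x) \<le> cmod E + cmod (cinner (B \<psi>) x) + cmod (\<i> * cinner \<psi> (V x))"
      unfolding lx using norm_triangle_ineq4[of "E + cinner (B \<psi>) x" "\<i> * cinner \<psi> (V x)"]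
        norm_triangle_ineq[of E "cinner (B \<psi>) x"] by linarith
    also have "\<dots> \<le> 2 * sqrt (a * C) * cnorm x + cnorm (B \<psi>) * cnorm x + cnorm \<psi> * (C * cnorm x)"
    proof -
      have "cmod (\<i> * cinner \<psi> (V x)) \<le> cnorm \<psi> * cnorm (V x)" by (simp add: norm_mult CS)
      also have "\<dots> \<le> cnorm \<psi> * (C * cnorm x)" using C by (simp add: cnorm_nonneg mult_left_mono)
      finally show ?thesis using Eb CS[of "B \<psi>" x] by linarith
    qed
    also have "\<dots> = K * cnorm x" by (simp add: K_def algebra_simps)
    finally show ?thesis .
  qed
  have "\<exists>z. \<forall>x\<in>DS. l x = cinner z x"
  proof (rule riesz[OF subS _ _ ])
    show "\<forall>x\<in>DS. \<forall>y\<in>DS. l (x + y) = l x + l y" using Sadd by (simp add: l_def cinner_add_right)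
    show "\<forall>c. \<forall>x\<in>DS. l (c *\<^sub>C x) = c * l x" using Ssc by (simp add: l_def cinner_scaleC_right)
    show "\<forall>x\<in>DS. cmod (l x) \<le> K * cnorm x" using bound by blast
  qed
  then obtain z where z: "\<And>x. x \<in> DS \<Longrightarrow> cinner \<psi> (S x) = cinner z x" unfolding l_def by blast
  have "\<forall>x\<in>DS. cinner (S x) \<psi> = cinner x z"
  proof
    fix x assume "x \<in> DS"
    hence "cnj (cinner \<psi> (S x)) = cnj (cinner z x)" using z by simp
    thus "cinner (S x) \<psi> = cinner x z" using cinner_commute[of "S x" \<psi>] cinner_commute[of x z] by simp
  qed
  thus "\<psi> \<in> adjoint_dom DS S" unfolding adjoint_dom_def by blast
qed

end
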